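(* Let $X,Y$ be finite nonempty sets, $\alpha>0$, and let $A\in\mathbb{R}^{X\times Y}$ satisfy $\operatorname{Ldim}_\alpha(A)=d$, $\|A\|_{\gamma_2}=\gamma$ and $\max_{x,y}|A(x,y)|=M$. Then $$\gamma\ge\frac{\alpha\sqrt d}{2(M+1)}-1 .$$ Consequently (since $M\le\gamma$), $d\le 4(\gamma+1)^4/\alpha^2$; in particular $d=O_\alpha(\gamma^4)$.
   Context: The $\gamma_2$ factorization norm of a matrix $A$ is $\|A\|_{\gamma_2}=\min_{UV=A}\|U\|_{\mathrm{row}}\|V\|_{\mathrm{col}}$, where the minimum is over all factorizations $A=UV$, $\|U\|_{\mathrm{row}}$ is the largest Euclidean norm of a row of $U$ and $\|V\|_{\mathrm{col}}$ the largest Euclidean norm of a column of $V$. A weighted mistake tree of depth $d$ over $X$ is a complete binary tree of depth $d$ in which each internal node $\nu$ is labelled by $x(\nu)\in X$ and a real number $w(\nu)$, with a designated left and right child. $A$ $\alpha$-shatters it if for every root-to-leaf path $(\nu_1,\dots,\nu_{d+1})$ there is $y\in Y$ such that for all $1\le i\le d$: $A(x(\nu_i),y)\ge w(\nu_i)+\alpha/2$ if $\nu_{i+1}$ is the left child of $\nu_i$, and $A(x(\nu_i),y)\le w(\nu_i)-\alpha/2$ if $\nu_{i+1}$ is the right child. $\operatorname{Ldim}_\alpha(A)$ is the largest $d$ such that some weighted mistake tree of depth $d$ is $\alpha$-shattered by $A$. *)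

theory Defs
  imports Complex_Main
begin

text \<open>A matrix indexed by X \<times> Y is a function A :: 'x \<Rightarrow> 'y \<Rightarrow> real, considered on X \<times> Y.\<close>

definition row_norm :: "'x set \<Rightarrow> nat \<Rightarrow> ('x \<Rightarrow> nat \<Rightarrow> real) \<Rightarrow> real" where
  "row_norm X k U = Max ((\<lambda>x. sqrt (\<Sum>i<k. (U x i)^2)) ` X)"

definition col_norm :: "'y set \<Rightarrow> nat \<Rightarrow> (nat \<Rightarrow> 'y \<Rightarrow> real) \<Rightarrow> real" where
  "col_norm Y k V = Max ((\<lambda>y. sqrt (\<Sum>i<k. (V i y)^2)) ` Y)"

definition is_factorization ::
  "'x set \<Rightarrow> 'y set \<Rightarrow> ('x \<Rightarrow> 'y \<Rightarrow> real) \<Rightarrow> nat \<Rightarrow> ('x \<Rightarrow> nat \<Rightarrow> real) \<Rightarrow> (nat \<Rightarrow> 'y \<Rightarrow> real) \<Rightarrow> bool" where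
  "is_factorization X Y A k U V \<longleftrightarrow> (\<forall>x\<in>X. \<forall>y\<in>Y. A x y = (\<Sum>i<k. U x i * V i y))"

definition gamma2 :: "'x set \<Rightarrow> 'y set \<Rightarrow> ('x \<Rightarrow> 'y \<Rightarrow> real) \<Rightarrow> real" where
  "gamma2 X Y A = Inf {row_norm X k U * col_norm Y k V | k U V. is_factorization X Y A k U V}"

text \<open>Weighted mistake tree of depth d: nodes are boolean lists (addresses from the root),
  internal nodes are those of length < d; label xl and weight w on internal nodes.
  A root-to-leaf path is a boolean list p of length d; the i-th node on the path is take i p,
  and p ! i = True means the path goes to the left child.\<close>

definition shatters ::
  "'x set \<Rightarrow> 'y set \<Rightarrow> ('x \<Rightarrow> 'y \<Rightarrow> real) \<Rightarrow> real \<Rightarrow> nat \<Rightarrow> (bool list \<Rightarrow> 'x) \<Rightarrow> (bool list \<Rightarrow> real) \<Rightarrow> bool" where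
  "shatters X Y A \<alpha> d xl w \<longleftrightarrow>
     (\<forall>\<nu>. length \<nu> < d \<longrightarrow> xl \<nu> \<in> X) \<and>
     (\<forall>p. length p = d \<longrightarrow> (\<exists>y\<in>Y. \<forall>i<d.
        (p ! i \<longrightarrow> A (xl (take i p)) y \<ge> w (take i p) + \<alpha> / 2) \<and>
        (\<not> p ! i \<longrightarrow> A (xl (take i p)) y \<le> w (take i p) - \<alpha> / 2)))"

definition Ldim :: "'x set \<Rightarrow> 'y set \<Rightarrow> real \<Rightarrow> ('x \<Rightarrow> 'y \<Rightarrow> real) \<Rightarrow> nat" where
  "Ldim X Y \<alpha> A = (GREATEST d. \<exists>xl w. shatters X Y A \<alpha> d xl w)"

end

theory Submission
  imports Defs
begin


definition sg :: "bool \<Rightarrow> real" where "sg b = (if b then 1 else -1)"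

definition Gl :: "('x \<Rightarrow> nat \<Rightarrow> real) \<Rightarrow> (bool list \<Rightarrow> 'x) \<Rightarrow> bool list \<Rightarrow> nat \<Rightarrow> real" where
  "Gl U xl nu j = (\<Sum>i<length nu. sg (nu!i) * U (xl (take i nu)) j)"

definition gl :: "(bool list \<Rightarrow> real) \<Rightarrow> bool list \<Rightarrow> real" where
  "gl w nu = (\<Sum>i<length nu. sg (nu!i) * w (take i nu))"

definition Bl :: "nat \<Rightarrow> ('x \<Rightarrow> nat \<Rightarrow> real) \<Rightarrow> (bool list \<Rightarrow> 'x) \<Rightarrow> (bool list \<Rightarrow> real) \<Rightarrow> real \<Rightarrow> bool list \<Rightarrow> real" where
  "Bl k U xl w lam nu = (\<Sum>j<k. Gl U xl nu j * U (xl nu) j) + lam * gl w nu * w nu"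

definition Phi :: "nat \<Rightarrow> ('x \<Rightarrow> nat \<Rightarrow> real) \<Rightarrow> (bool list \<Rightarrow> 'x) \<Rightarrow> (bool list \<Rightarrow> real) \<Rightarrow> real \<Rightarrow> bool list \<Rightarrow> real" where
  "Phi k U xl w lam nu = (\<Sum>j<k. (Gl U xl nu j)^2) + lam * (gl w nu)^2"

primrec pth :: "nat \<Rightarrow> ('x \<Rightarrow> nat \<Rightarrow> real) \<Rightarrow> (bool list \<Rightarrow> 'x) \<Rightarrow> (bool list \<Rightarrow> real) \<Rightarrow> real \<Rightarrow> nat \<Rightarrow> bool list" where
  "pth k U xl w lam 0 = []"
| "pth k U xl w lam (Suc n) = pth k U xl w lam n @ [Bl k U xl w lam (pth k U xl w lam n) \<le> 0]"

lemma length_pth: "length (pth k U xl w lam n) = n"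
  by (induction n) auto

lemma Gl_snoc: "Gl U xl (nu @ [b]) j = Gl U xl nu j + sg b * U (xl nu) j"
proof -
  have "Gl U xl (nu @ [b]) j = (\<Sum>i<Suc (length nu). sg ((nu @ [b])!i) * U (xl (take i (nu @ [b]))) j)"
    by (simp add: Gl_def)
  also have "\<dots> = (\<Sum>i<length nu. sg ((nu @ [b])!i) * U (xl (take i (nu @ [b]))) j) + sg b * U (xl nu) j"
    by simp
  also have "(\<Sum>i<length nu. sg ((nu @ [b])!i) * U (xl (take i (nu @ [b]))) j) = Gl U xl nu j"
    unfolding Gl_def by (rule sum.cong) (auto simp: nth_append)
  finally show ?thesis .
qed

lemma gl_snoc: "gl w (nu @ [b]) = gl w nu + sg b * w nu"
proof -
  have "gl w (nu @ [b]) = (\<Sum>i<Suc (length nu). sg ((nu @ [b])!i) * w (take i (nu @ [b])))"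
    by (simp add: gl_def)
  also have "\<dots> = (\<Sum>i<length nu. sg ((nu @ [b])!i) * w (take i (nu @ [b]))) + sg b * w nu"
    by simp
  also have "(\<Sum>i<length nu. sg ((nu @ [b])!i) * w (take i (nu @ [b]))) = gl w nu"
    unfolding gl_def by (rule sum.cong) (auto simp: nth_append)
  finally show ?thesis .
qed

lemma sg_sq: "(sg b)^2 = 1" by (simp add: sg_def)

lemma Phi_snoc:
  "Phi k U xl w lam (nu @ [b]) = Phi k U xl w lam nu + 2 * sg b * Bl k U xl w lam nu
     + ((\<Sum>j<k. (U (xl nu) j)^2) + lam * (w nu)^2)"
proof -
  have "(\<Sum>j<k. (Gl U xl (nu @ [b]) j)^2) = (\<Sum>j<k. (Gl U xl nu j)^2 + 2 * sg b * (Gl U xl nu j * U (xl nu) j) + (U (xl nu) j)^2)"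
    by (rule sum.cong) (auto simp: Gl_snoc power2_sum power_mult_distrib sg_sq algebra_simps)
  also have "\<dots> = (\<Sum>j<k. (Gl U xl nu j)^2) + 2 * sg b * (\<Sum>j<k. Gl U xl nu j * U (xl nu) j) + (\<Sum>j<k. (U (xl nu) j)^2)"
    by (simp add: sum.distrib sum_distrib_left)
  finally have 1: "(\<Sum>j<k. (Gl U xl (nu @ [b]) j)^2) = \<dots>" .
  have 2: "(gl w (nu @ [b]))^2 = (gl w nu)^2 + 2 * sg b * (gl w nu * w nu) + (w nu)^2"
    by (simp add: gl_snoc power2_sum power_mult_distrib sg_sq algebra_simps)
  show ?thesis unfolding Phi_def Bl_def 1 2 by (simp add: algebra_simps)
qed

lemma sg_Bl: "sg (Bl k U xl w lam nu \<le> 0) * Bl k U xl w lam nu \<le> 0"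
  by (simp add: sg_def)

lemma Phi_pth:
  assumes "\<And>n. n < m \<Longrightarrow> (\<Sum>j<k. (U (xl (pth k U xl w lam n)) j)^2) + lam * (w (pth k U xl w lam n))^2 \<le> K"
  shows "Phi k U xl w lam (pth k U xl w lam m) \<le> m * K"
  using assms
proof (induction m)
  case 0
  then show ?case by (simp add: Phi_def Gl_def gl_def)
next
  case (Suc m)
  have "Phi k U xl w lam (pth k U xl w lam (Suc m)) = Phi k U xl w lam (pth k U xl w lam m)
     + 2 * (sg (Bl k U xl w lam (pth k U xl w lam m) \<le> 0) * Bl k U xl w lam (pth k U xl w lam m))
     + ((\<Sum>j<k. (U (xl (pth k U xl w lam m)) j)^2) + lam * (w (pth k U xl w lam m))^2)"
    by (simp add: Phi_snoc algebra_simps)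
  also have "\<dots> \<le> m * K + 0 + K"
    using Suc sg_Bl by (intro add_mono) (auto simp: mult.commute)
  finally show ?case by (simp add: algebra_simps)
qed

lemma amgm: fixes a b mu :: real assumes "mu > 0" shows "a * b \<le> (mu * a^2 + b^2 / mu) / 2"
proof -
  have "0 \<le> (mu * a - b)^2 / mu" using assms by simp
  also have "(mu * a - b)^2 / mu = mu * a^2 + b^2 / mu - 2 * a * b"
    using assms by (simp add: power2_diff field_simps power2_eq_square)
  finally show ?thesis by simp
qed

lemma key:
  fixes A :: "'x \<Rightarrow> 'y \<Rightarrow> real"
  assumes sh: "shatters X Y A \<alpha> d xl w" and fac: "is_factorization X Y A k U V"
    and R: "\<forall>x\<in>X. (\<Sum>j<k. (U x j)^2) \<le> R2"
    and C: "\<forall>y\<in>Y. (\<Sum>j<k. (V j y)^2) \<le> C2"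
    and W: "\<forall>nu. length nu < d \<longrightarrow> \<bar>w nu\<bar> \<le> W"
    and lam: "lam > 0" and mu: "mu > 0"
  shows "real d * \<alpha> \<le> mu * (real d * (R2 + lam * W^2)) + (C2 + 1/lam) / mu"
proof -
  define p where "p = pth k U xl w lam d"
  have lp: "length p = d" by (simp add: p_def length_pth)
  have xX: "\<And>nu. length nu < d \<Longrightarrow> xl nu \<in> X" using sh by (simp add: shatters_def)
  obtain y where yY: "y \<in> Y" and hy: "\<forall>i<d.
        (p ! i \<longrightarrow> A (xl (take i p)) y \<ge> w (take i p) + \<alpha> / 2) \<and>
        (\<not> p ! i \<longrightarrow> A (xl (take i p)) y \<le> w (take i p) - \<alpha> / 2)"
    using sh lp unfolding shatters_def by blast
  have each: "\<alpha> / 2 \<le> sg (p!i) * (A (xl (take i p)) y - w (take i p))" if "i < d" for i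
    using hy that by (cases "p!i") (auto simp: sg_def)
  have "real d * (\<alpha> / 2) \<le> (\<Sum>i<d. sg (p!i) * (A (xl (take i p)) y - w (take i p)))"
    using sum_mono[of "{..<d}" "\<lambda>_. \<alpha>/2", OF each] by simp
  also have "\<dots> = (\<Sum>i<d. \<Sum>j<k. sg (p!i) * U (xl (take i p)) j * V j y) - gl w p"
  proof -
    have "A (xl (take i p)) y = (\<Sum>j<k. U (xl (take i p)) j * V j y)" if "i < d" for i
      using fac xX[of "take i p"] yY that lp by (simp add: is_factorization_def)
    then show ?thesis
      by (simp add: gl_def lp right_diff_distrib sum_subtractf sum_distrib_left mult.assoc)
  qed
  also have "(\<Sum>i<d. \<Sum>j<k. sg (p!i) * U (xl (take i p)) j * V j y) = (\<Sum>j<k. Gl U xl p j * V j y)"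
    by (simp add: Gl_def lp sum_distrib_right sum.swap[of _ "{..<d}"])
  finally have main: "real d * (\<alpha> / 2) \<le> (\<Sum>j<k. Gl U xl p j * V j y) - gl w p" .
  have "(\<Sum>j<k. Gl U xl p j * V j y) \<le> (\<Sum>j<k. (mu * (Gl U xl p j)^2 + (V j y)^2 / mu) / 2)"
    by (rule sum_mono) (rule amgm[OF mu])
  also have "\<dots> = (mu * (\<Sum>j<k. (Gl U xl p j)^2) + (\<Sum>j<k. (V j y)^2) / mu) / 2"
    by (simp add: sum.distrib sum_distrib_left sum_divide_distrib flip: sum_divide_distrib)
  also have "\<dots> \<le> (mu * (\<Sum>j<k. (Gl U xl p j)^2) + C2 / mu) / 2"
    using C yY mu by (simp add: divide_right_mono)
  finally have 1: "(\<Sum>j<k. Gl U xl p j * V j y) \<le> (mu * (\<Sum>j<k. (Gl U xl p j)^2) + C2 / mu) / 2" .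
  have 2: "- gl w p \<le> (mu * lam * (gl w p)^2 + 1 / (mu * lam)) / 2"
    using amgm[of "mu * lam" "gl w p" "-1"] mu lam by simp
  have "Phi k U xl w lam p \<le> real d * (R2 + lam * W^2)"
    unfolding p_def
  proof (rule Phi_pth)
    fix n assume n: "n < d"
    have "length (pth k U xl w lam n) < d" using n by (simp add: length_pth)
    then have "xl (pth k U xl w lam n) \<in> X" "\<bar>w (pth k U xl w lam n)\<bar> \<le> W"
      using xX W by auto
    then have "\<bar>w (pth k U xl w lam n)\<bar>^2 \<le> W^2"
      by (intro power_mono) auto
    then have "(w (pth k U xl w lam n))^2 \<le> W^2" by simp
    then show "(\<Sum>j<k. (U (xl (pth k U xl w lam n)) j)^2) + lam * (w (pth k U xl w lam n))^2 \<le> R2 + lam * W^2"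
      using R \<open>xl (pth k U xl w lam n) \<in> X\<close> lam by (intro add_mono) auto
  qed
  then have 3: "mu * Phi k U xl w lam p \<le> mu * (real d * (R2 + lam * W^2))"
    using mu by simp
  have "real d * (\<alpha> / 2) \<le> (mu * Phi k U xl w lam p + (C2 + 1/lam) / mu) / 2"
  proof -
    have eq: "(mu * Phi k U xl w lam p + (C2 + 1/lam) / mu) / 2 =
      (mu * (\<Sum>j<k. (Gl U xl p j)^2) + C2 / mu) / 2 + (mu * lam * (gl w p)^2 + 1 / (mu * lam)) / 2"
      using mu lam by (simp add: Phi_def field_simps)
    show ?thesis unfolding eq using main 1 2 by linarith
  qed
  then show ?thesis using 3 by simp
qed



lemma shatters_0: "Y \<noteq> {} \<Longrightarrow> shatters X Y A \<alpha> 0 xl w"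
  by (auto simp: shatters_def)

lemma shatters_path:
  assumes "shatters X Y A \<alpha> d xl w" "length p = d"
  shows "\<exists>y\<in>Y. \<forall>i<d.
        (p ! i \<longrightarrow> A (xl (take i p)) y \<ge> w (take i p) + \<alpha> / 2) \<and>
        (\<not> p ! i \<longrightarrow> A (xl (take i p)) y \<le> w (take i p) - \<alpha> / 2)"
proof -
  have all: "\<forall>p. length p = d \<longrightarrow> (\<exists>y\<in>Y. \<forall>i<d.
        (p ! i \<longrightarrow> A (xl (take i p)) y \<ge> w (take i p) + \<alpha> / 2) \<and>
        (\<not> p ! i \<longrightarrow> A (xl (take i p)) y \<le> w (take i p) - \<alpha> / 2))"
    using assms(1) unfolding shatters_def by (rule conjunct2)
  show ?thesis by (rule all[rule_format, OF assms(2)])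
qed

lemma shatters_bound:
  assumes "finite Y" "\<alpha> > 0" "shatters X Y A \<alpha> n xl w"
  shows "n < card Y"
proof -
  define q where "q m = replicate m False @ replicate (n - m) True" for m
  have lq: "length (q m) = n" if "m \<le> n" for m using that by (simp add: q_def)
  define P where "P m y \<longleftrightarrow> y \<in> Y \<and> (\<forall>i<n.
        (q m ! i \<longrightarrow> A (xl (take i (q m))) y \<ge> w (take i (q m)) + \<alpha> / 2) \<and>
        (\<not> q m ! i \<longrightarrow> A (xl (take i (q m))) y \<le> w (take i (q m)) - \<alpha> / 2))" for m y
  have "\<forall>m\<in>{..n}. \<exists>y. P m y"
  proof
    fix m assume "m \<in> {..n}"
    then have "length (q m) = n" using lq by simp
    from shatters_path[OF assms(3) this] obtain y where "y \<in> Y" "\<forall>i<n.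
        (q m ! i \<longrightarrow> A (xl (take i (q m))) y \<ge> w (take i (q m)) + \<alpha> / 2) \<and>
        (\<not> q m ! i \<longrightarrow> A (xl (take i (q m))) y \<le> w (take i (q m)) - \<alpha> / 2)" by (elim bexE)
    then have "P m y" unfolding P_def by (intro conjI)
    then show "\<exists>y. P m y" by (rule exI)
  qed
  then have "\<exists>f. \<forall>m\<in>{..n}. P m (f m)" by (rule bchoice)
  then obtain f where "\<forall>m\<in>{..n}. P m (f m)" by blast
  then have fY: "\<forall>m\<in>{..n}. f m \<in> Y" and hf: "\<forall>m\<in>{..n}. \<forall>i<n.
        (q m ! i \<longrightarrow> A (xl (take i (q m))) (f m) \<ge> w (take i (q m)) + \<alpha> / 2) \<and>
        (\<not> q m ! i \<longrightarrow> A (xl (take i (q m))) (f m) \<le> w (take i (q m)) - \<alpha> / 2)"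
    unfolding P_def by simp_all
  have neq: "f m \<noteq> f m'" if "m < m'" "m' \<le> n" for m m'
  proof
    assume eq: "f m = f m'"
    have t: "take m (q m) = replicate m False" "take m (q m') = replicate m False"
      using that by (simp_all add: q_def)
    have "q m ! m" "\<not> q m' ! m" using that by (simp_all add: q_def nth_append)
    moreover have mi: "m \<in> {..n}" "m' \<in> {..n}" "m < n" using that by auto
    ultimately have "A (xl (take m (q m))) (f m) \<ge> w (take m (q m)) + \<alpha> / 2"
      "A (xl (take m (q m'))) (f m') \<le> w (take m (q m')) - \<alpha> / 2"
      using hf[rule_format, OF mi(1) mi(3)] hf[rule_format, OF mi(2) mi(3)] by simp_all
    then have "A (xl (replicate m False)) (f m) \<ge> w (replicate m False) + \<alpha> / 2"
      "A (xl (replicate m False)) (f m') \<le> w (replicate m False) - \<alpha> / 2"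
      by (simp_all only: t)
    then show False using eq assms(2) by simp
  qed
  have "inj_on f {..n}"
  proof (rule inj_onI)
    fix a b assume ab: "a \<in> {..n}" "b \<in> {..n}" "f a = f b"
    show "a = b"
    proof (rule ccontr)
      assume "a \<noteq> b"
      then consider "a < b" | "b < a" by linarith
      then show False
      proof cases
        case 1 then show False using neq[of a b] ab by auto
      next
        case 2 then show False using neq[of b a] ab by auto
      qed
    qed
  qed
  then have "card {..n} \<le> card Y"
    using fY assms(1) by (intro card_inj_on_le) auto
  then show ?thesis by simp
qed

lemma Ldim_shatters:
  assumes "finite Y" "Y \<noteq> {}" "\<alpha> > 0"
  shows "\<exists>xl w. shatters X Y A \<alpha> (Ldim X Y \<alpha> A) xl w"
  unfolding Ldim_def
proof (rule GreatestI_nat)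
  show "\<exists>xl w. shatters X Y A \<alpha> 0 xl w" using shatters_0[OF assms(2)] by blast
  fix n assume "\<exists>xl w. shatters X Y A \<alpha> n xl w"
  then obtain xl w where shn: "shatters X Y A \<alpha> n xl w" by blast
  show "n \<le> card Y" using shatters_bound[OF assms(1) assms(3) shn] by simp
qed

lemma w_bound:
  assumes sh: "shatters X Y A \<alpha> d xl w" and Mb: "\<forall>x\<in>X. \<forall>y\<in>Y. \<bar>A x y\<bar> \<le> M"
    and a: "\<alpha> > 0" and l: "length nu < d"
  shows "\<bar>w nu\<bar> \<le> M"
proof -
  define m where "m = length nu"
  define p1 where "p1 = nu @ replicate (d - m) True"
  define p2 where "p2 = nu @ replicate (d - m) False"
  have x: "xl nu \<in> X" using sh l by (simp add: shatters_def)
  have "length p1 = d" "length p2 = d" using l by (simp_all add: p1_def p2_def m_def)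
  have all: "\<forall>p. length p = d \<longrightarrow> (\<exists>y\<in>Y. \<forall>i<d.
        (p ! i \<longrightarrow> A (xl (take i p)) y \<ge> w (take i p) + \<alpha> / 2) \<and>
        (\<not> p ! i \<longrightarrow> A (xl (take i p)) y \<le> w (take i p) - \<alpha> / 2))"
    using sh unfolding shatters_def by (rule conjunct2)
  have ex1: "\<exists>y\<in>Y. \<forall>i<d. (p1 ! i \<longrightarrow> A (xl (take i p1)) y \<ge> w (take i p1) + \<alpha> / 2) \<and>
        (\<not> p1 ! i \<longrightarrow> A (xl (take i p1)) y \<le> w (take i p1) - \<alpha> / 2)"
    by (rule shatters_path[OF sh \<open>length p1 = d\<close>])
  then obtain y1 where y1: "y1 \<in> Y" and
    h1: "\<forall>i<d. (p1 ! i \<longrightarrow> A (xl (take i p1)) y1 \<ge> w (take i p1) + \<alpha> / 2)"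
    by blast
  have ex2: "\<exists>y\<in>Y. \<forall>i<d. (p2 ! i \<longrightarrow> A (xl (take i p2)) y \<ge> w (take i p2) + \<alpha> / 2) \<and>
        (\<not> p2 ! i \<longrightarrow> A (xl (take i p2)) y \<le> w (take i p2) - \<alpha> / 2)"
    by (rule shatters_path[OF sh \<open>length p2 = d\<close>])
  then obtain y2 where y2: "y2 \<in> Y" and
    h2: "\<forall>i<d. (\<not> p2 ! i \<longrightarrow> A (xl (take i p2)) y2 \<le> w (take i p2) - \<alpha> / 2)"
    by blast
  note y = y1 y2
  have pf: "p1 ! m" "\<not> p2 ! m" "take m p1 = nu" "take m p2 = nu"
    using l by (simp_all add: p1_def p2_def m_def nth_append)
  have "A (xl nu) y1 \<ge> w nu + \<alpha> / 2" "A (xl nu) y2 \<le> w nu - \<alpha> / 2"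
  proof -
    have "m < d" using l m_def by simp
    then have "p1 ! m \<longrightarrow> A (xl (take m p1)) y1 \<ge> w (take m p1) + \<alpha> / 2"
      "\<not> p2 ! m \<longrightarrow> A (xl (take m p2)) y2 \<le> w (take m p2) - \<alpha> / 2"
      using h1 h2 by blast+
    then show "A (xl nu) y1 \<ge> w nu + \<alpha> / 2" "A (xl nu) y2 \<le> w nu - \<alpha> / 2"
      using pf by simp_all
  qed
  moreover have "\<bar>A (xl nu) y1\<bar> \<le> M" "\<bar>A (xl nu) y2\<bar> \<le> M" using Mb x y by auto
  ultimately show ?thesis using a by (simp add: abs_le_iff)
qed

lemma shatters_nonzero:
  assumes sh: "shatters X Y A \<alpha> d xl w" and a: "\<alpha> > 0" and d: "d > 0"
  shows "\<exists>x\<in>X. \<exists>y\<in>Y. A x y \<noteq> 0"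
proof -
  have x: "xl [] \<in> X" using sh d by (simp add: shatters_def)
  obtain y1 where y1: "y1 \<in> Y" and
    h1: "\<forall>i<d. (replicate d True ! i \<longrightarrow> A (xl (take i (replicate d True))) y1 \<ge> w (take i (replicate d True)) + \<alpha> / 2)"
    using shatters_path[OF sh length_replicate[of d True]] by blast
  obtain y2 where y2: "y2 \<in> Y" and
    h2: "\<forall>i<d. (\<not> replicate d False ! i \<longrightarrow> A (xl (take i (replicate d False))) y2 \<le> w (take i (replicate d False)) - \<alpha> / 2)"
    using shatters_path[OF sh length_replicate[of d False]] by blast
  note y = y1 y2
  have "A (xl []) y1 \<ge> w [] + \<alpha> / 2" "A (xl []) y2 \<le> w [] - \<alpha> / 2"
    using d h1 h2 by auto
  then have "A (xl []) y1 \<noteq> 0 \<or> A (xl []) y2 \<noteq> 0" using a by auto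
  then show ?thesis using x y by blast
qed

lemma sum_sq_bound:
  fixes a b :: "nat \<Rightarrow> real"
  assumes ra: "(\<Sum>j<k. (a j)^2) \<le> r^2" and cb: "(\<Sum>j<k. (b j)^2) \<le> c^2"
    and r0: "r \<ge> 0" and c0: "c \<ge> 0"
  shows "(\<Sum>j<k. a j * b j) \<le> r * c"
proof (cases "r = 0 \<or> c = 0")
  case True
  then show ?thesis
  proof
    assume "r = 0"
    then have "(\<Sum>j<k. (a j)^2) = 0" using ra by (simp add: antisym sum_nonneg)
    then have "\<forall>j\<in>{..<k}. (a j)^2 = 0" by (subst (asm) sum_nonneg_eq_0_iff) auto
    then show ?thesis using \<open>r = 0\<close> by simp
  next
    assume "c = 0"
    then have "(\<Sum>j<k. (b j)^2) = 0" using cb by (simp add: antisym sum_nonneg)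
    then have "\<forall>j\<in>{..<k}. (b j)^2 = 0" by (subst (asm) sum_nonneg_eq_0_iff) auto
    then show ?thesis using \<open>c = 0\<close> by simp
  qed
next
  case False
  then have rp: "r > 0" and cp: "c > 0" using r0 c0 by auto
  define mu where "mu = c / r"
  have mu: "mu > 0" using rp cp by (simp add: mu_def)
  have "(\<Sum>j<k. a j * b j) \<le> (\<Sum>j<k. (mu * (a j)^2 + (b j)^2 / mu) / 2)"
    by (rule sum_mono) (rule amgm[OF mu])
  also have "\<dots> = (mu * (\<Sum>j<k. (a j)^2) + (\<Sum>j<k. (b j)^2) / mu) / 2"
    by (simp add: sum.distrib sum_distrib_left flip: sum_divide_distrib)
  also have "\<dots> \<le> (mu * r^2 + c^2 / mu) / 2"
    using ra cb mu by (intro divide_right_mono add_mono mult_left_mono) auto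
  also have "\<dots> = r * c" using rp cp by (simp add: mu_def field_simps power2_eq_square)
  finally show ?thesis .
qed

lemma fact_bounds:
  assumes "finite X" "X \<noteq> {}" "finite Y" "Y \<noteq> {}" and fac: "is_factorization X Y A k U V"
  shows "row_norm X k U \<ge> 0" "col_norm Y k V \<ge> 0"
    "\<forall>x\<in>X. (\<Sum>j<k. (U x j)^2) \<le> (row_norm X k U)^2"
    "\<forall>y\<in>Y. (\<Sum>j<k. (V j y)^2) \<le> (col_norm Y k V)^2"
    "\<forall>x\<in>X. \<forall>y\<in>Y. \<bar>A x y\<bar> \<le> row_norm X k U * col_norm Y k V"
proof -
  have r: "sqrt (\<Sum>j<k. (U x j)^2) \<le> row_norm X k U" if "x \<in> X" for x
    unfolding row_norm_def using assms(1) that by (intro Max_ge) auto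
  have c: "sqrt (\<Sum>j<k. (V j y)^2) \<le> col_norm Y k V" if "y \<in> Y" for y
    unfolding col_norm_def using assms(3) that by (intro Max_ge) auto
  obtain x0 where "x0 \<in> X" using assms(2) by blast
  have "0 \<le> sqrt (\<Sum>j<k. (U x0 j)^2)" by (simp add: sum_nonneg)
  then show r0: "row_norm X k U \<ge> 0" using r[OF \<open>x0 \<in> X\<close>] by linarith
  obtain y0 where "y0 \<in> Y" using assms(4) by blast
  have "0 \<le> sqrt (\<Sum>j<k. (V j y0)^2)" by (simp add: sum_nonneg)
  then show c0: "col_norm Y k V \<ge> 0" using c[OF \<open>y0 \<in> Y\<close>] by linarith
  have r2: "(\<Sum>j<k. (U x j)^2) \<le> (row_norm X k U)^2" if "x \<in> X" for x
  proof -
    have S0: "0 \<le> (\<Sum>j<k. (U x j)^2)" by (simp add: sum_nonneg)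
    have "(sqrt (\<Sum>j<k. (U x j)^2))^2 \<le> (row_norm X k U)^2"
      by (rule power_mono[OF r[OF that]]) (simp add: sum_nonneg)
    then show ?thesis using S0 by simp
  qed
  then show "\<forall>x\<in>X. (\<Sum>j<k. (U x j)^2) \<le> (row_norm X k U)^2" by blast
  have c2: "(\<Sum>j<k. (V j y)^2) \<le> (col_norm Y k V)^2" if "y \<in> Y" for y
  proof -
    have S0: "0 \<le> (\<Sum>j<k. (V j y)^2)" by (simp add: sum_nonneg)
    have "(sqrt (\<Sum>j<k. (V j y)^2))^2 \<le> (col_norm Y k V)^2"
      by (rule power_mono[OF c[OF that]]) (simp add: sum_nonneg)
    then show ?thesis using S0 by simp
  qed
  then show "\<forall>y\<in>Y. (\<Sum>j<k. (V j y)^2) \<le> (col_norm Y k V)^2" by blast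
  show "\<forall>x\<in>X. \<forall>y\<in>Y. \<bar>A x y\<bar> \<le> row_norm X k U * col_norm Y k V"
  proof (intro ballI)
    fix x y assume xy: "x \<in> X" "y \<in> Y"
    have e: "A x y = (\<Sum>j<k. U x j * V j y)" using fac xy by (simp add: is_factorization_def)
    have "(\<Sum>j<k. U x j * V j y) \<le> row_norm X k U * col_norm Y k V"
      using r2[OF xy(1)] c2[OF xy(2)] r0 c0 by (rule sum_sq_bound)
    moreover have "(\<Sum>j<k. (- U x j) * V j y) \<le> row_norm X k U * col_norm Y k V"
      using r2[OF xy(1)] c2[OF xy(2)] r0 c0 by (intro sum_sq_bound) auto
    moreover have "(\<Sum>j<k. (- U x j) * V j y) = - (\<Sum>j<k. U x j * V j y)"
      by (simp add: sum_negf)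
    ultimately show "\<bar>A x y\<bar> \<le> row_norm X k U * col_norm Y k V"
      unfolding e by linarith
  qed
qed



theorem proposition3p2:
  fixes X :: "'x set" and Y :: "'y set" and A :: "'x \<Rightarrow> 'y \<Rightarrow> real"
    and \<alpha> \<gamma> M :: real and d :: nat
  assumes "finite X" "X \<noteq> {}" "finite Y" "Y \<noteq> {}"
    and "\<alpha> > 0"
    and "Ldim X Y \<alpha> A = d"
    and "gamma2 X Y A = \<gamma>"
    and "M = Max ((\<lambda>(x, y). \<bar>A x y\<bar>) ` (X \<times> Y))"
  shows "\<gamma> \<ge> \<alpha> * sqrt (real d) / (2 * (M + 1)) - 1 \<and>
         real d \<le> 4 * (\<gamma> + 1) ^ 4 / \<alpha> ^ 2"
proof -
  have fin: "finite (X \<times> Y)" using assms(1,3) by simp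
  have Mb: "\<forall>x\<in>X. \<forall>y\<in>Y. \<bar>A x y\<bar> \<le> M"
  proof (intro ballI)
    fix x y assume "x \<in> X" "y \<in> Y"
    then have "(\<lambda>(x, y). \<bar>A x y\<bar>) (x, y) \<in> (\<lambda>(x, y). \<bar>A x y\<bar>) ` (X \<times> Y)" by blast
    then show "\<bar>A x y\<bar> \<le> M" unfolding assms(8) using fin by (intro Max_ge) auto
  qed
  obtain x0 y0 where x0: "x0 \<in> X" and y0: "y0 \<in> Y" using assms(2,4) by blast
  have M0: "0 \<le> M" using Mb x0 y0 by (meson abs_ge_zero order_trans)
  obtain xl w where sh: "shatters X Y A \<alpha> d xl w"
    using Ldim_shatters[OF assms(3,4,5), of X A] assms(6) by auto
  have Wb: "\<forall>nu. length nu < d \<longrightarrow> \<bar>w nu\<bar> \<le> M"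
    using w_bound[OF sh Mb assms(5)] by blast
  define S where "S = {row_norm X k U * col_norm Y k V | k U V. is_factorization X Y A k U V}"
  have Sprop: "0 \<le> p \<and> M \<le> p \<and> real d * \<alpha>^2 \<le> 4 * ((p + M^2) * (p + 1))" if "p \<in> S" for p
  proof -
    from that obtain k U V where fac: "is_factorization X Y A k U V"
      and p: "p = row_norm X k U * col_norm Y k V" unfolding S_def by blast
    define r where "r = row_norm X k U"
    define c where "c = col_norm Y k V"
    note fb = fact_bounds[OF assms(1-4) fac, folded r_def c_def]
    have pr: "p = r * c" using p r_def c_def by simp
    have p0: "0 \<le> p" using fb(1,2) pr by simp
    have Mp: "M \<le> p" unfolding assms(8) using fin assms(2,4) fb(5) pr
      by (intro Max.boundedI) auto
    have "real d * \<alpha>^2 \<le> 4 * ((p + M^2) * (p + 1))"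
    proof (cases "d = 0")
      case True
      have "0 \<le> (p + M^2) * (p + 1)" using p0 by (intro mult_nonneg_nonneg) auto
      then show ?thesis using True by simp
    next
      case False
      then obtain x y where xy: "x \<in> X" "y \<in> Y" "A x y \<noteq> 0"
        using shatters_nonzero[OF sh assms(5)] by blast
      have "0 < \<bar>A x y\<bar>" using xy by simp
      also have "\<dots> \<le> r * c" using fb(5) xy by blast
      finally have rc: "0 < r * c" .
      then have rp: "r > 0" and cp: "c > 0" using fb(1,2)
        by (metis less_eq_real_def mult_eq_0_iff)+
      define lam where "lam = r / c"
      have lam: "lam > 0" using rp cp by (simp add: lam_def)
      define P where "P = r^2 + lam * M^2"
      define Q where "Q = c^2 + 1 / lam"
      have P: "P > 0" using rp lam by (simp add: P_def add_pos_nonneg)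
      define mu where "mu = \<alpha> / (2 * P)"
      have mu: "mu > 0" using P assms(5) by (simp add: mu_def)
      have k: "real d * \<alpha> \<le> mu * (real d * P) + Q / mu"
        using key[OF sh fac fb(3) fb(4) Wb lam mu] unfolding P_def Q_def .
      have e1: "mu * (real d * P) = real d * \<alpha> / 2" using P by (simp add: mu_def)
      have e2: "Q / mu = 2 * P * Q / \<alpha>" using P assms(5) by (simp add: mu_def)
      have "real d * \<alpha> / 2 \<le> 2 * P * Q / \<alpha>" using k e1 e2 by simp
      then have "real d * \<alpha> / 2 * \<alpha> \<le> 2 * P * Q"
        using assms(5) by (simp add: pos_le_divide_eq)
      then have "real d * \<alpha>^2 \<le> 4 * (P * Q)" by (simp add: power2_eq_square algebra_simps)
      moreover have "P * Q = (p + M^2) * (p + 1)"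
        using rp cp unfolding P_def Q_def lam_def pr
        by (simp add: field_simps power2_eq_square)
      ultimately show ?thesis by simp
    qed
    then show ?thesis using p0 Mp by simp
  qed
  have Sne: "S \<noteq> {}"
  proof -
    obtain h where h: "bij_betw h {0..<card X} X" using ex_bij_betw_nat_finite[OF assms(1)] by blast
    define U where "U x i = (if h i = x then 1 else 0 :: real)" for x i
    define V where "V i y = A (h i) y" for i y
    have "is_factorization X Y A (card X) U V"
      unfolding is_factorization_def
    proof (intro ballI)
      fix x y assume x: "x \<in> X" and y: "y \<in> Y"
      have "(\<Sum>i<card X. U x i * V i y) = (\<Sum>i\<in>{0..<card X}. (\<lambda>x'. if x' = x then A x' y else 0) (h i))"
        unfolding U_def V_def lessThan_atLeast0 by (rule sum.cong) auto
      also have "\<dots> = (\<Sum>x'\<in>X. if x' = x then A x' y else 0)"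
        by (rule sum.reindex_bij_betw[OF h])
      also have "\<dots> = A x y" using x assms(1) by simp
      finally show "A x y = (\<Sum>i<card X. U x i * V i y)" by simp
    qed
    then show ?thesis unfolding S_def by blast
  qed
  have bdd: "bdd_below S" using Sprop by (intro bdd_belowI[of _ 0]) auto
  have gS: "\<gamma> = Inf S" using assms(7) by (simp add: gamma2_def S_def)
  have Mg: "M \<le> \<gamma>" unfolding gS using Sne Sprop by (intro cInf_greatest) auto
  have g0: "0 \<le> \<gamma>" using M0 Mg by simp
  have gb: "real d * \<alpha>^2 \<le> 4 * ((\<gamma> + M^2) * (\<gamma> + 1))"
  proof (rule field_le_epsilon)
    fix e :: real assume e: "0 < e"
    define K where "K = 4 * (2 * \<gamma> + M^2 + 2)"
    have K: "K > 0" using g0 by (simp add: K_def add_nonneg_pos)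
    define ep where "ep = min 1 (e / K)"
    have ep: "0 < ep" "ep \<le> 1" "ep * K \<le> e" using e K
      by (auto simp: ep_def min_def pos_le_divide_eq field_simps)
    have "Inf S < \<gamma> + ep" using gS ep by simp
    then obtain p where pS: "p \<in> S" and pl: "p < \<gamma> + ep" using cInf_lessD[OF Sne] by blast
    have gp: "\<gamma> \<le> p" unfolding gS using pS bdd by (rule cInf_lower)
    have "real d * \<alpha>^2 \<le> 4 * ((p + M^2) * (p + 1))" using Sprop[OF pS] by simp
    also have "\<dots> \<le> 4 * ((\<gamma> + ep + M^2) * (\<gamma> + ep + 1))"
      using pl gp g0 by (intro mult_left_mono mult_mono) auto
    also have "\<dots> = 4 * ((\<gamma> + M^2) * (\<gamma> + 1)) + ep * (4 * (2 * \<gamma> + M^2 + 1)) + 4 * (ep * ep)"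
      by (simp add: algebra_simps power2_eq_square)
    also have "\<dots> \<le> 4 * ((\<gamma> + M^2) * (\<gamma> + 1)) + ep * K"
    proof -
      have "ep * ep \<le> ep * 1" using ep by (intro mult_left_mono) auto
      then show ?thesis by (simp add: K_def algebra_simps)
    qed
    also have "\<dots> \<le> 4 * ((\<gamma> + M^2) * (\<gamma> + 1)) + e" using ep by simp
    finally show "real d * \<alpha>^2 \<le> 4 * ((\<gamma> + M^2) * (\<gamma> + 1)) + e" .
  qed
  have "\<gamma> + M^2 \<le> (M + 1)^2 * (\<gamma> + 1)"
  proof -
    have "(M + 1)^2 * (\<gamma> + 1) - (\<gamma> + M^2) = M^2 * \<gamma> + 2 * M * \<gamma> + 2 * M + 1"
      by (simp add: algebra_simps power2_eq_square)
    also have "\<dots> \<ge> 0" using M0 g0 by simp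
    finally show ?thesis by simp
  qed
  then have "(\<gamma> + M^2) * (\<gamma> + 1) \<le> (M + 1)^2 * (\<gamma> + 1) * (\<gamma> + 1)"
    using g0 by (intro mult_right_mono) auto
  then have b1: "real d * \<alpha>^2 \<le> (2 * (M + 1) * (\<gamma> + 1))^2"
    using gb by (simp add: power2_eq_square algebra_simps)
  have "sqrt (real d * \<alpha>^2) \<le> sqrt ((2 * (M + 1) * (\<gamma> + 1))^2)"
    using b1 by (rule real_sqrt_le_mono)
  moreover have "sqrt (real d * \<alpha>^2) = \<alpha> * sqrt (real d)"
    using assms(5) by (simp add: real_sqrt_mult)
  moreover have "sqrt ((2 * (M + 1) * (\<gamma> + 1))^2) = 2 * (M + 1) * (\<gamma> + 1)"
    using M0 g0 by simp
  ultimately have b2: "\<alpha> * sqrt (real d) \<le> 2 * (M + 1) * (\<gamma> + 1)" by simp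
  have part1: "\<alpha> * sqrt (real d) / (2 * (M + 1)) - 1 \<le> \<gamma>"
  proof -
    have "\<alpha> * sqrt (real d) / (2 * (M + 1)) \<le> \<gamma> + 1"
      using b2 M0 by (simp add: pos_divide_le_eq mult.commute mult.left_commute)
    then show ?thesis by simp
  qed
  have "(2 * (M + 1) * (\<gamma> + 1))^2 \<le> (2 * (\<gamma> + 1) * (\<gamma> + 1))^2"
    using Mg M0 g0 by (intro power_mono mult_right_mono) auto
  then have "real d * \<alpha>^2 \<le> 4 * (\<gamma> + 1) ^ 4"
    using b1 by (simp add: power2_eq_square algebra_simps power4_eq_xxxx)
  then have part2: "real d \<le> 4 * (\<gamma> + 1) ^ 4 / \<alpha> ^ 2"
    using assms(5) by (simp add: pos_le_divide_eq)
  show ?thesis using part1 part2 by simp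
qed

end
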